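(* Let $(A,B)$ and $(A',B')$ be two weakly non-singular pairs of loxodromic elements in $\mathrm{Sp}(n,1)$, with associated tuples $p=(p_1,\dots,p_{2n})$ and $p'=(p'_1,\dots,p'_{2n})$ and normalized Gram matrices $G(p)$, $G(p')$. Then there exists $C\in\mathrm{Sp}(n,1)$ with $C(p_i)=p'_i$ for $i=1,\dots,2n$ if and only if $O_{G(p)}=O_{G(p')}$.
   Context: $\mathbb H^{n,1}$: right $\mathbb H$-vector space $\mathbb H^{n+1}$ with form $\langle\mathbf z,\mathbf w\rangle=\bar w_{n+1}z_1+\bar w_2z_2+\dots+\bar w_nz_n+\bar w_1z_{n+1}$; points of $\mathbb H\mathbb P^n$ are right lines, $\mathbf z\mapsto z$. $\mathrm{Sp}(n,1)$ preserves the form. A loxodromic $A$ (exactly two boundary fixed points, no real eigenvalue) has null eigenvectors $\mathbf a_A,\mathbf r_A$ (attracting/repelling fixed points $a_A,r_A$) and positive eigenvectors $\mathbf x_{j,A}$, $1\le j\le n-1$ (points $x_{j,A}$). A pair $(A,B)$ is weakly non-singular if $A,B$ are regular (right-eigenvalue similarity classes pairwise distinct), have no common fixed point, and $n-2$ canonical flags $(a_A,L_A,W_{j,A})$ of $A$ form generic pairs with $n-2$ canonical flags of $B$ (here $L_A$ is the $\mathbb H$-line through $a_A,r_A$, $W_{j,A}$ the projectivization of $\mathbf x_{j,A}^\perp$; flags $(p,C,\Pi),(p',C',\Pi')$ are a generic pair if $p\notin\partial C'$, $p'\notin\partial C$, $\partial C\cap\partial\Pi'=\emptyset=\partial C'\cap\partial\Pi$);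 indices are arranged so that for $1\le k\le n-2$, $\langle\mathbf x_{k,A},\mathbf a_B\rangle,\langle\mathbf x_{k,B},\mathbf a_A\rangle,\langle\mathbf r_A,\mathbf x_{k,B}\rangle,\langle\mathbf r_B,\mathbf x_{k,A}\rangle\ne0$. Associated tuple: $p_1=a_A,p_2=r_A,p_3=a_B,p_4=r_B$, $p_j=x_{j-4,A}$ ($5\le j\le n+2$), $p_k=x_{k-(n+2),B}$ ($n+3\le k\le 2n$). The Gram matrix $G(p)=(\langle\mathbf p_i,\mathbf p_j\rangle)$ is normalized if the lifts satisfy $g_{12}=g_{13}=g_{14}=1$, $|g_{23}|=1$, $g_{1k}=1$ ($n+3\le k\le 2n$), $g_{3j}=1$ ($5\le j\le n+2$); it is well defined up to the action $g_{ij}\mapsto\mu g_{ij}\bar\mu$ of $\mu\in\mathrm{Sp}(1)$ (unit quaternions). $O_{G(p)}=\{(\mu g_{ij}\bar\mu)_{i,j}:\mu\in\mathrm{Sp}(1)\}$ is this $\mathrm{Sp}(1)$-orbit. *)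

theory Defs
  imports Complex_Main
begin

datatype quat = Quat (qr: real) (qi: real) (qj: real) (qk: real)

instantiation quat :: comm_monoid_add
begin
definition zero_quat :: quat where "zero_quat = Quat 0 0 0 0"
definition plus_quat :: "quat \<Rightarrow> quat \<Rightarrow> quat" where
  "plus_quat p q = Quat (qr p + qr q) (qi p + qi q) (qj p + qj q) (qk p + qk q)"
instance by standard (auto simp: zero_quat_def plus_quat_def)
end

instantiation quat :: "{times, one}"
begin
definition one_quat :: quat where "one_quat = Quat 1 0 0 0"
definition times_quat :: "quat \<Rightarrow> quat \<Rightarrow> quat" where
  "times_quat p q = Quat
     (qr p * qr q - qi p * qi q - qj p * qj q - qk p * qk q)
     (qr p * qi q + qi p * qr q + qj p * qk q - qk p * qj q)
     (qr p * qj q - qi p * qk q + qj p * qr q + qk p * qi q)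
     (qr p * qk q + qi p * qj q - qj p * qi q + qk p * qr q)"
instance ..
end

definition qcnj :: "quat \<Rightarrow> quat" where
  "qcnj q = Quat (qr q) (- qi q) (- qj q) (- qk q)"

definition qnorm :: "quat \<Rightarrow> real" where
  "qnorm q = sqrt ((qr q)\<^sup>2 + (qi q)\<^sup>2 + (qj q)\<^sup>2 + (qk q)\<^sup>2)"

definition qreal :: "quat \<Rightarrow> bool" where
  "qreal q \<longleftrightarrow> qi q = 0 \<and> qj q = 0 \<and> qk q = 0"

definition qsimilar :: "quat \<Rightarrow> quat \<Rightarrow> bool" where
  "qsimilar \<mu> \<nu> \<longleftrightarrow> (\<exists>q. q \<noteq> 0 \<and> q * \<nu> = \<mu> * q)"

text \<open>Vectors of \<open>\<bbbH>\<^sup>n\<^sup>+\<^sup>1\<close> are functions \<open>nat \<Rightarrow> quat\<close> supported on \<open>{1..n+1}\<close>;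
  matrices are functions \<open>nat \<Rightarrow> nat \<Rightarrow> quat\<close> supported on \<open>{1..n+1}\<^sup>2\<close>.\<close>

definition hvec :: "nat \<Rightarrow> (nat \<Rightarrow> quat) \<Rightarrow> bool" where
  "hvec n z \<longleftrightarrow> (\<forall>i. i \<notin> {1..n+1} \<longrightarrow> z i = 0)"

definition hmat :: "nat \<Rightarrow> (nat \<Rightarrow> nat \<Rightarrow> quat) \<Rightarrow> bool" where
  "hmat n C \<longleftrightarrow> (\<forall>i j. i \<notin> {1..n+1} \<or> j \<notin> {1..n+1} \<longrightarrow> C i j = 0)"

definition mv :: "nat \<Rightarrow> (nat \<Rightarrow> nat \<Rightarrow> quat) \<Rightarrow> (nat \<Rightarrow> quat) \<Rightarrow> nat \<Rightarrow> quat" where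
  "mv n C z = (\<lambda>i. if i \<in> {1..n+1} then (\<Sum>j=1..n+1. C i j * z j) else 0)"

definition rscale :: "(nat \<Rightarrow> quat) \<Rightarrow> quat \<Rightarrow> nat \<Rightarrow> quat" where
  "rscale z c = (\<lambda>i. z i * c)"

definition hform :: "nat \<Rightarrow> (nat \<Rightarrow> quat) \<Rightarrow> (nat \<Rightarrow> quat) \<Rightarrow> quat" where
  "hform n z w = qcnj (w (n+1)) * z 1 + (\<Sum>i=2..n. qcnj (w i) * z i) + qcnj (w 1) * z (n+1)"

definition Sp_n1 :: "nat \<Rightarrow> (nat \<Rightarrow> nat \<Rightarrow> quat) set" where
  "Sp_n1 n = {C. hmat n C
     \<and> (\<forall>z w. hvec n z \<longrightarrow> hvec n w \<longrightarrow> hform n (mv n C z) (mv n C w) = hform n z w)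
     \<and> (\<exists>D. hmat n D \<and> (\<forall>z. hvec n z \<longrightarrow> mv n D (mv n C z) = z \<and> mv n C (mv n D z) = z))}"

text \<open>Two nonzero vectors represent the same point of \<open>\<bbbH>\<bbbP>\<^sup>n\<close> (same right line).\<close>
definition same_point :: "(nat \<Rightarrow> quat) \<Rightarrow> (nat \<Rightarrow> quat) \<Rightarrow> bool" where
  "same_point z w \<longleftrightarrow> (\<exists>c. c \<noteq> 0 \<and> w = rscale z c)"

definition hpoint :: "(nat \<Rightarrow> quat) \<Rightarrow> (nat \<Rightarrow> quat) set" where
  "hpoint z = {rscale z c | c. True}"

definition null_vec :: "nat \<Rightarrow> (nat \<Rightarrow> quat) \<Rightarrow> bool" where
  "null_vec n z \<longleftrightarrow> hvec n z \<and> z \<noteq> (\<lambda>_. 0) \<and> hform n z z = 0"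

definition pos_vec :: "nat \<Rightarrow> (nat \<Rightarrow> quat) \<Rightarrow> bool" where
  "pos_vec n z \<longleftrightarrow> hvec n z \<and> qr (hform n z z) > 0"

definition eigvec :: "nat \<Rightarrow> (nat \<Rightarrow> nat \<Rightarrow> quat) \<Rightarrow> (nat \<Rightarrow> quat) \<Rightarrow> quat \<Rightarrow> bool" where
  "eigvec n C z c \<longleftrightarrow> hvec n z \<and> z \<noteq> (\<lambda>_. 0) \<and> mv n C z = rscale z c"

text \<open>Fixed points of \<open>C\<close> on the boundary \<open>\<partial>\<bbbH>\<^sup>n\<^sub>\<bbbH>\<close> (null right lines).\<close>
definition bdry_fixed_points :: "nat \<Rightarrow> (nat \<Rightarrow> nat \<Rightarrow> quat) \<Rightarrow> (nat \<Rightarrow> quat) set set" where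
  "bdry_fixed_points n C = {hpoint z | z. null_vec n z \<and> (\<exists>c. eigvec n C z c)}"

definition loxodromic :: "nat \<Rightarrow> (nat \<Rightarrow> nat \<Rightarrow> quat) \<Rightarrow> bool" where
  "loxodromic n C \<longleftrightarrow> C \<in> Sp_n1 n \<and> card (bdry_fixed_points n C) = 2
     \<and> \<not> (\<exists>z c. eigvec n C z c \<and> qreal c)"

text \<open>Regular: the right-eigenvalue similarity classes are pairwise distinct, i.e.
  each similarity class of eigenvalues has a single eigen-line.\<close>
definition regular :: "nat \<Rightarrow> (nat \<Rightarrow> nat \<Rightarrow> quat) \<Rightarrow> bool" where
  "regular n C \<longleftrightarrow> (\<forall>z w \<mu> \<nu>. eigvec n C z \<mu> \<longrightarrow> eigvec n C w \<nu> \<longrightarrow> qsimilar \<mu> \<nu>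
      \<longrightarrow> same_point z w)"

definition attracting_vec :: "nat \<Rightarrow> (nat \<Rightarrow> nat \<Rightarrow> quat) \<Rightarrow> (nat \<Rightarrow> quat) \<Rightarrow> bool" where
  "attracting_vec n C a \<longleftrightarrow> null_vec n a \<and> (\<exists>c. eigvec n C a c \<and> qnorm c > 1)"

definition repelling_vec :: "nat \<Rightarrow> (nat \<Rightarrow> nat \<Rightarrow> quat) \<Rightarrow> (nat \<Rightarrow> quat) \<Rightarrow> bool" where
  "repelling_vec n C r \<longleftrightarrow> null_vec n r \<and> (\<exists>c. eigvec n C r c \<and> qnorm c < 1)"

definition pos_eigvec :: "nat \<Rightarrow> (nat \<Rightarrow> nat \<Rightarrow> quat) \<Rightarrow> (nat \<Rightarrow> quat) \<Rightarrow> bool" where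
  "pos_eigvec n C x \<longleftrightarrow> pos_vec n x \<and> (\<exists>c. eigvec n C x c)"

text \<open>No common fixed point in \<open>\<bbbH>\<^sup>n\<^sub>\<bbbH> \<union> \<partial>\<bbbH>\<^sup>n\<^sub>\<bbbH>\<close> (non-positive right lines).\<close>
definition no_common_fixed_point :: "nat \<Rightarrow> (nat \<Rightarrow> nat \<Rightarrow> quat) \<Rightarrow> (nat \<Rightarrow> nat \<Rightarrow> quat) \<Rightarrow> bool" where
  "no_common_fixed_point n A B \<longleftrightarrow>
     \<not> (\<exists>z c \<mu>. qr (hform n z z) \<le> 0 \<and> eigvec n A z c \<and> eigvec n B z \<mu>)"

text \<open>Subspaces are represented as sets of vectors; the boundary \<open>\<partial>S\<close> of (the projectivization
  of) a subspace \<open>S\<close> is the set of null vectors in \<open>S\<close>.\<close>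
definition bdry :: "nat \<Rightarrow> (nat \<Rightarrow> quat) set \<Rightarrow> (nat \<Rightarrow> quat) set" where
  "bdry n S = {z \<in> S. null_vec n z}"

definition hline :: "(nat \<Rightarrow> quat) \<Rightarrow> (nat \<Rightarrow> quat) \<Rightarrow> (nat \<Rightarrow> quat) set" where
  "hline a r = {(\<lambda>i. a i * \<alpha> + r i * \<beta>) | \<alpha> \<beta>. True}"

definition perp :: "nat \<Rightarrow> (nat \<Rightarrow> quat) \<Rightarrow> (nat \<Rightarrow> quat) set" where
  "perp n x = {z. hvec n z \<and> hform n z x = 0}"

definition canonical_flag :: "nat \<Rightarrow> (nat \<Rightarrow> quat) \<Rightarrow> (nat \<Rightarrow> quat) \<Rightarrow> (nat \<Rightarrow> quat)
    \<Rightarrow> (nat \<Rightarrow> quat) \<times> (nat \<Rightarrow> quat) set \<times> (nat \<Rightarrow> quat) set" where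
  "canonical_flag n a r x = (a, hline a r, perp n x)"

definition generic_pair :: "nat
    \<Rightarrow> (nat \<Rightarrow> quat) \<times> (nat \<Rightarrow> quat) set \<times> (nat \<Rightarrow> quat) set
    \<Rightarrow> (nat \<Rightarrow> quat) \<times> (nat \<Rightarrow> quat) set \<times> (nat \<Rightarrow> quat) set \<Rightarrow> bool" where
  "generic_pair n F F' = (case F of (p, C, \<Pi>) \<Rightarrow> case F' of (p', C', \<Pi>') \<Rightarrow>
      p \<notin> bdry n C' \<and> p' \<notin> bdry n C
      \<and> bdry n C \<inter> bdry n \<Pi>' = {} \<and> bdry n C' \<inter> bdry n \<Pi> = {})"

definition wns_data :: "nat \<Rightarrow> (nat \<Rightarrow> nat \<Rightarrow> quat) \<Rightarrow> (nat \<Rightarrow> nat \<Rightarrow> quat)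
    \<Rightarrow> (nat \<Rightarrow> quat) \<Rightarrow> (nat \<Rightarrow> quat) \<Rightarrow> (nat \<Rightarrow> quat) \<Rightarrow> (nat \<Rightarrow> quat)
    \<Rightarrow> (nat \<Rightarrow> nat \<Rightarrow> quat) \<Rightarrow> (nat \<Rightarrow> nat \<Rightarrow> quat) \<Rightarrow> bool" where
  "wns_data n A B aA rA aB rB xA xB \<longleftrightarrow>
     attracting_vec n A aA \<and> repelling_vec n A rA \<and>
     attracting_vec n B aB \<and> repelling_vec n B rB \<and>
     (\<forall>k\<in>{1..n-2}. pos_eigvec n A (xA k) \<and> pos_eigvec n B (xB k)) \<and>
     (\<forall>k\<in>{1..n-2}. \<forall>l\<in>{1..n-2}. k \<noteq> l \<longrightarrow>
        \<not> same_point (xA k) (xA l) \<and> \<not> same_point (xB k) (xB l)) \<and>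
     (\<forall>k\<in>{1..n-2}. generic_pair n (canonical_flag n aA rA (xA k)) (canonical_flag n aB rB (xB k)))"

definition weakly_nonsingular :: "nat \<Rightarrow> (nat \<Rightarrow> nat \<Rightarrow> quat) \<Rightarrow> (nat \<Rightarrow> nat \<Rightarrow> quat) \<Rightarrow> bool" where
  "weakly_nonsingular n A B \<longleftrightarrow>
     loxodromic n A \<and> loxodromic n B \<and> regular n A \<and> regular n B \<and>
     no_common_fixed_point n A B \<and>
     (\<exists>aA rA aB rB xA xB. wns_data n A B aA rA aB rB xA xB)"

text \<open>\<open>p\<close> is (a lift of) the associated tuple of the weakly non-singular pair \<open>(A,B)\<close>:
  \<open>p\<^sub>1 = a\<^sub>A, p\<^sub>2 = r\<^sub>A, p\<^sub>3 = a\<^sub>B, p\<^sub>4 = r\<^sub>B\<close>, \<open>p\<^sub>j = x\<^sub>j\<^sub>-\<^sub>4\<^sub>,\<^sub>A\<close> (\<open>5 \<le> j \<le> n+2\<close>),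
  \<open>p\<^sub>k = x\<^sub>k\<^sub>-\<^sub>(\<^sub>n\<^sub>+\<^sub>2\<^sub>)\<^sub>,\<^sub>B\<close> (\<open>n+3 \<le> k \<le> 2n\<close>), with the indices arranged as in the paper.\<close>
definition associated_tuple :: "nat \<Rightarrow> (nat \<Rightarrow> nat \<Rightarrow> quat) \<Rightarrow> (nat \<Rightarrow> nat \<Rightarrow> quat)
    \<Rightarrow> (nat \<Rightarrow> nat \<Rightarrow> quat) \<Rightarrow> bool" where
  "associated_tuple n A B p \<longleftrightarrow>
     wns_data n A B (p 1) (p 2) (p 3) (p 4) (\<lambda>k. p (k + 4)) (\<lambda>k. p (k + (n + 2))) \<and>
     (\<forall>k\<in>{1..n-2}.
        hform n (p (k + 4)) (p 3) \<noteq> 0 \<and> hform n (p (k + (n + 2))) (p 1) \<noteq> 0 \<and>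
        hform n (p 2) (p (k + (n + 2))) \<noteq> 0 \<and> hform n (p 4) (p (k + 4)) \<noteq> 0)"

definition gram :: "nat \<Rightarrow> (nat \<Rightarrow> nat \<Rightarrow> quat) \<Rightarrow> nat \<Rightarrow> nat \<Rightarrow> quat" where
  "gram n p = (\<lambda>i j. if i \<in> {1..2*n} \<and> j \<in> {1..2*n} then hform n (p i) (p j) else 0)"

definition gram_normalized :: "nat \<Rightarrow> (nat \<Rightarrow> nat \<Rightarrow> quat) \<Rightarrow> bool" where
  "gram_normalized n p \<longleftrightarrow>
     (let g = gram n p in
       g 1 2 = 1 \<and> g 1 3 = 1 \<and> g 1 4 = 1 \<and> qnorm (g 2 3) = 1 \<and>
       (\<forall>k\<in>{n+3..2*n}. g 1 k = 1) \<and> (\<forall>j\<in>{5..n+2}. g 3 j = 1))"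

definition sp1_orbit :: "(nat \<Rightarrow> nat \<Rightarrow> quat) \<Rightarrow> (nat \<Rightarrow> nat \<Rightarrow> quat) set" where
  "sp1_orbit G = {(\<lambda>i j. \<mu> * G i j * qcnj \<mu>) | \<mu>. qnorm \<mu> = 1}"

end

theory Submission
  imports Defs
begin


instantiation quat :: "{uminus, minus}"
begin
definition uminus_quat :: "quat \<Rightarrow> quat" where
  "uminus_quat q = Quat (- qr q) (- qi q) (- qj q) (- qk q)"
definition minus_quat :: "quat \<Rightarrow> quat \<Rightarrow> quat" where
  "minus_quat p q = Quat (qr p - qr q) (qi p - qi q) (qj p - qj q) (qk p - qk q)"
instance ..
end

lemma quat_comps [simp]:
  "qr 0 = 0" "qi 0 = 0" "qj 0 = 0" "qk 0 = 0"
  "qr 1 = 1" "qi 1 = 0" "qj 1 = 0" "qk 1 = 0"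
  "qr (p + q) = qr p + qr q" "qi (p + q) = qi p + qi q" "qj (p + q) = qj p + qj q" "qk (p + q) = qk p + qk q"
  "qr (p - q) = qr p - qr q" "qi (p - q) = qi p - qi q" "qj (p - q) = qj p - qj q" "qk (p - q) = qk p - qk q"
  "qr (- q) = - qr q" "qi (- q) = - qi q" "qj (- q) = - qj q" "qk (- q) = - qk q"
  "qr (p * q) = qr p * qr q - qi p * qi q - qj p * qj q - qk p * qk q"
  "qi (p * q) = qr p * qi q + qi p * qr q + qj p * qk q - qk p * qj q"
  "qj (p * q) = qr p * qj q - qi p * qk q + qj p * qr q + qk p * qi q"
  "qk (p * q) = qr p * qk q + qi p * qj q - qj p * qi q + qk p * qr q"
  by (simp_all add: zero_quat_def one_quat_def plus_quat_def minus_quat_def uminus_quat_def times_quat_def)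

lemma quat_eq_iff: "p = q \<longleftrightarrow> qr p = qr q \<and> qi p = qi q \<and> qj p = qj q \<and> qk p = qk q"
  by (cases p; cases q) auto

instance quat :: ring_1
  by standard (simp_all add: quat_eq_iff algebra_simps)

instantiation quat :: "{inverse}"
begin
definition inverse_quat :: "quat \<Rightarrow> quat" where
  "inverse_quat q = (let m = (qr q)\<^sup>2 + (qi q)\<^sup>2 + (qj q)\<^sup>2 + (qk q)\<^sup>2 in
     Quat (qr q / m) (- qi q / m) (- qj q / m) (- qk q / m))"
definition divide_quat :: "quat \<Rightarrow> quat \<Rightarrow> quat" where
  "divide_quat p q = p * inverse q"
instance ..
end

lemma qnormsq_pos: "q \<noteq> 0 \<Longrightarrow> (qr q)\<^sup>2 + (qi q)\<^sup>2 + (qj q)\<^sup>2 + (qk q)\<^sup>2 > 0"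
proof -
  assume "q \<noteq> 0"
  then have "qr q \<noteq> 0 \<or> qi q \<noteq> 0 \<or> qj q \<noteq> 0 \<or> qk q \<noteq> 0" by (auto simp: quat_eq_iff)
  then show ?thesis by (auto simp: add_pos_nonneg add_nonneg_pos)
qed

instance quat :: division_ring
proof
  fix a :: quat assume a: "a \<noteq> 0"
  define m where "m = (qr a)\<^sup>2 + (qi a)\<^sup>2 + (qj a)\<^sup>2 + (qk a)\<^sup>2"
  have m: "m \<noteq> 0" using qnormsq_pos[OF a] m_def by simp
  show "inverse a * a = 1" using m
    by (simp add: quat_eq_iff inverse_quat_def Let_def m_def[symmetric] divide_simps) (simp add: m_def power2_eq_square algebra_simps)
  show "a * inverse a = 1" using m
    by (simp add: quat_eq_iff inverse_quat_def Let_def m_def[symmetric] divide_simps) (simp add: m_def power2_eq_square algebra_simps)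
next
  fix a b :: quat show "a / b = a * inverse b" by (simp add: divide_quat_def)
next
  show "inverse (0::quat) = 0" by (simp add: quat_eq_iff inverse_quat_def)
qed


definition nsq :: "quat \<Rightarrow> real" where
  "nsq q = (qr q)\<^sup>2 + (qi q)\<^sup>2 + (qj q)\<^sup>2 + (qk q)\<^sup>2"

definition qrl :: "real \<Rightarrow> quat" where "qrl r = Quat r 0 0 0"

lemma qrl_comps [simp]: "qr (qrl r) = r" "qi (qrl r) = 0" "qj (qrl r) = 0" "qk (qrl r) = 0"
  by (simp_all add: qrl_def)

lemma qcnj_comps [simp]: "qr (qcnj q) = qr q" "qi (qcnj q) = - qi q" "qj (qcnj q) = - qj q" "qk (qcnj q) = - qk q"
  by (simp_all add: qcnj_def)

lemma qrl_comm: "qrl r * a = a * qrl r"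
  by (simp add: quat_eq_iff)

lemma qrl_0 [simp]: "qrl 0 = 0" and qrl_1 [simp]: "qrl 1 = 1"
  by (simp_all add: quat_eq_iff)

lemma qcnj_mult: "qcnj (a * b) = qcnj b * qcnj a"
  by (simp add: quat_eq_iff algebra_simps)
lemma qcnj_add: "qcnj (a + b) = qcnj a + qcnj b"
  by (simp add: quat_eq_iff algebra_simps)
lemma qcnj_diff: "qcnj (a - b) = qcnj a - qcnj b"
  by (simp add: quat_eq_iff algebra_simps)
lemma qcnj_minus: "qcnj (- a) = - qcnj a"
  by (simp add: quat_eq_iff algebra_simps)
lemma qcnj_qcnj [simp]: "qcnj (qcnj a) = a"
  by (simp add: quat_eq_iff)
lemma qcnj_0 [simp]: "qcnj 0 = 0" and qcnj_1 [simp]: "qcnj 1 = 1"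
  by (simp_all add: quat_eq_iff)
lemma qcnj_qrl [simp]: "qcnj (qrl r) = qrl r"
  by (simp add: quat_eq_iff)
lemma qcnj_eq_iff [simp]: "qcnj a = qcnj b \<longleftrightarrow> a = b"
  by (metis qcnj_qcnj)
lemma qcnj_eq_0_iff [simp]: "qcnj a = 0 \<longleftrightarrow> a = 0"
  by (metis qcnj_0 qcnj_qcnj)
lemma qcnj_sum: "qcnj (sum f A) = sum (\<lambda>x. qcnj (f x)) A"
  by (induction A rule: infinite_finite_induct) (simp_all add: qcnj_add)
lemma qr_sum: "qr (sum f A) = sum (\<lambda>x. qr (f x)) A"
  by (induction A rule: infinite_finite_induct) simp_all
lemma mult_qcnj_self: "a * qcnj a = qrl (nsq a)"
  by (simp add: quat_eq_iff nsq_def power2_eq_square algebra_simps)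
lemma qcnj_mult_self: "qcnj a * a = qrl (nsq a)"
  by (simp add: quat_eq_iff nsq_def power2_eq_square algebra_simps)
lemma nsq_nonneg: "nsq a \<ge> 0"
  by (simp add: nsq_def)
lemma nsq_pos: "a \<noteq> 0 \<Longrightarrow> nsq a > 0"
  using qnormsq_pos by (simp add: nsq_def)
lemma nsq_eq_0: "nsq a = 0 \<longleftrightarrow> a = 0"
  using nsq_pos[of a] by (cases "a = 0") (auto simp: nsq_def)
lemma nsq_mult: "nsq (a * b) = nsq a * nsq b"
  by (simp add: nsq_def power2_eq_square algebra_simps)
lemma qnorm_nsq: "qnorm a = sqrt (nsq a)"
  by (simp add: qnorm_def nsq_def)
lemma qnorm_mult: "qnorm (a * b) = qnorm a * qnorm b"
  by (simp add: qnorm_nsq nsq_mult real_sqrt_mult)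
lemma qnorm_qcnj: "qnorm (qcnj a) = qnorm a"
  by (simp add: qnorm_def)
lemma qnorm_1_iff: "qnorm a = 1 \<longleftrightarrow> nsq a = 1"
  by (simp add: qnorm_nsq)
lemma qr_qcnj_mult_self: "qr (qcnj a * a) = nsq a"
  by (simp add: qcnj_mult_self)
lemma add_qcnj: "a + qcnj a = qrl (2 * qr a)"
  by (simp add: quat_eq_iff)
lemma qcnj_eq_self_iff: "qcnj a = a \<longleftrightarrow> a = qrl (qr a)"
  by (auto simp: quat_eq_iff)
lemma qcnj_inverse: "qcnj (inverse a) = inverse (qcnj a)"
proof (cases "a = 0")
  case True then show ?thesis by simp
next
  case False
  then have "qcnj a \<noteq> 0" by simp
  have "qcnj a * qcnj (inverse a) = 1"
    by (metis False qcnj_1 qcnj_mult left_inverse)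
  then show ?thesis
    by (metis inverse_unique)
qed
lemma unit_qcnj: "nsq a = 1 \<Longrightarrow> qcnj a * a = 1" "nsq a = 1 \<Longrightarrow> a * qcnj a = 1"
  by (simp_all add: qcnj_mult_self mult_qcnj_self)
lemma nsq_qcnj: "nsq (qcnj a) = nsq a"
  by (simp add: nsq_def)



declare sum.cl_ivl_Suc [simp del]

lemma hform_diff1: "hform n (z - z') w = hform n z w - hform n z' w"
  by (simp add: hform_def algebra_simps sum_subtractf)
lemma hform_diff2: "hform n z (w - w') = hform n z w - hform n z w'"
  by (simp add: hform_def algebra_simps sum_subtractf qcnj_diff)
lemma hform_rscale1: "hform n (rscale z c) w = hform n z w * c"
  by (simp add: hform_def rscale_def algebra_simps sum_distrib_right)
lemma hform_rscale2: "hform n z (rscale w c) = qcnj c * hform n z w"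
  by (simp add: hform_def rscale_def algebra_simps sum_distrib_left qcnj_mult)
lemma hform_sym: "qcnj (hform n z w) = hform n w z"
  by (simp add: hform_def qcnj_add qcnj_mult qcnj_sum algebra_simps)
lemma hform_self_real: "hform n z z = qrl (qr (hform n z z))"
  by (metis hform_sym qcnj_eq_self_iff)
lemma hform_zero1 [simp]: "hform n (\<lambda>_. 0) w = 0"
  by (simp add: hform_def)
lemma hform_zero2 [simp]: "hform n z (\<lambda>_. 0) = 0"
  by (simp add: hform_def)

lemma hvec_diff: "hvec n z \<Longrightarrow> hvec n w \<Longrightarrow> hvec n (z - w)"
  by (simp add: hvec_def)
lemma hvec_rscale: "hvec n z \<Longrightarrow> hvec n (rscale z c)"
  by (simp add: hvec_def rscale_def)
lemma hvec_mv: "hvec n (mv n C z)"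
  by (simp add: hvec_def mv_def)

lemma mv_diff: "mv n C (z - w) = mv n C z - mv n C w"
  by (rule ext) (simp add: mv_def algebra_simps sum_subtractf)
lemma mv_rscale: "mv n C (rscale z c) = rscale (mv n C z) c"
  by (rule ext) (simp add: mv_def rscale_def algebra_simps sum_distrib_right)

definition idm :: "nat \<Rightarrow> nat \<Rightarrow> nat \<Rightarrow> quat" where
  "idm n = (\<lambda>i j. if i = j \<and> i \<in> {1..n+1} then 1 else 0)"

definition mmul :: "nat \<Rightarrow> (nat \<Rightarrow> nat \<Rightarrow> quat) \<Rightarrow> (nat \<Rightarrow> nat \<Rightarrow> quat) \<Rightarrow> nat \<Rightarrow> nat \<Rightarrow> quat" where
  "mmul n M N = (\<lambda>i j. if i \<in> {1..n+1} \<and> j \<in> {1..n+1} then (\<Sum>k=1..n+1. M i k * N k j) else 0)"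

lemma sum_idm: "i \<in> {1..n+1} \<Longrightarrow> (\<Sum>j=1..n+1. idm n i j * z j) = z i"
proof -
  assume i: "i \<in> {1..n+1}"
  have "(\<Sum>j=1..n+1. idm n i j * z j) = (\<Sum>j=1..n+1. if i = j then z j else 0)"
    by (rule sum.cong) (auto simp: idm_def i)
  also have "\<dots> = z i" using i by (simp add: sum.delta)
  finally show ?thesis .
qed

lemma mv_idm: assumes "hvec n z" shows "mv n (idm n) z = z"
proof (rule ext)
  fix i show "mv n (idm n) z i = z i"
  proof (cases "i \<in> {1..n+1}")
    case True
    then show ?thesis unfolding mv_def using sum_idm[OF True, of z] by (simp only: if_True)
  next
    case False then show ?thesis using assms by (auto simp: mv_def hvec_def)
  qed
qed

lemma mv_mmul: "mv n (mmul n M N) z = mv n M (mv n N z)"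
proof (rule ext)
  fix i
  show "mv n (mmul n M N) z i = mv n M (mv n N z) i"
  proof (cases "i \<in> {1..n+1}")
    case True
    have "mv n (mmul n M N) z i = (\<Sum>j=1..n+1. \<Sum>k=1..n+1. M i k * N k j * z j)"
      using True by (simp add: mv_def mmul_def sum_distrib_right)
    also have "\<dots> = (\<Sum>k=1..n+1. \<Sum>j=1..n+1. M i k * N k j * z j)"
      by (rule sum.swap)
    also have "\<dots> = mv n M (mv n N z) i"
      using True by (simp add: mv_def sum_distrib_left mult.assoc)
    finally show ?thesis .
  qed (auto simp: mv_def)
qed

lemma Sp_iso: "C \<in> Sp_n1 n \<Longrightarrow> hvec n z \<Longrightarrow> hvec n w \<Longrightarrow> hform n (mv n C z) (mv n C w) = hform n z w"
  by (simp add: Sp_n1_def)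

lemma Sp_idm: "idm n \<in> Sp_n1 n"
proof -
  have "hmat n (idm n)" by (auto simp: hmat_def idm_def)
  then show ?thesis unfolding Sp_n1_def using mv_idm[of n] by (auto intro!: exI[of _ "idm n"])
qed

lemma Sp_mmul: assumes "M \<in> Sp_n1 n" "N \<in> Sp_n1 n" shows "mmul n M N \<in> Sp_n1 n"
proof -
  obtain DM where DM: "hmat n DM" "\<And>z. hvec n z \<Longrightarrow> mv n DM (mv n M z) = z \<and> mv n M (mv n DM z) = z"
    using assms(1) by (auto simp: Sp_n1_def)
  obtain DN where DN: "hmat n DN" "\<And>z. hvec n z \<Longrightarrow> mv n DN (mv n N z) = z \<and> mv n N (mv n DN z) = z"
    using assms(2) by (auto simp: Sp_n1_def)
  have "hmat n (mmul n M N)" by (auto simp: hmat_def mmul_def)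
  moreover have "hform n (mv n (mmul n M N) z) (mv n (mmul n M N) w) = hform n z w"
    if "hvec n z" "hvec n w" for z w
    using that assms by (simp add: mv_mmul Sp_iso hvec_mv)
  moreover have "hmat n (mmul n DN DM)" by (auto simp: hmat_def mmul_def)
  moreover have "mv n (mmul n DN DM) (mv n (mmul n M N) z) = z \<and> mv n (mmul n M N) (mv n (mmul n DN DM) z) = z"
    if "hvec n z" for z
    using that DM DN by (simp add: mv_mmul hvec_mv)
  ultimately show ?thesis unfolding Sp_n1_def by blast
qed

definition tau :: "nat \<Rightarrow> nat \<Rightarrow> nat" where
  "tau n j = (if j = 1 then n+1 else if j = n+1 then 1 else j)"

lemma sum_split_R:
  assumes "n \<ge> 1"
  shows "(\<Sum>j=1..n+1. f j) = f 1 + (\<Sum>j=2..n. f j) + f (n+1::nat)"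
proof -
  have e: "{1..n+1} = insert 1 (insert (n+1) {2..n})" using assms by auto
  have a: "1 \<notin> insert (n+1) {2..n}" "n+1 \<notin> {2..n}" using assms by auto
  have "(\<Sum>j=1..n+1. f j) = f 1 + (f (n+1) + (\<Sum>j=2..n. f j))"
    unfolding e using a by simp
  then show ?thesis by (simp only: algebra_simps)
qed

lemma sum_hform: assumes "n \<ge> 1"
  shows "(\<Sum>j=1..n+1. qcnj (w (tau n j)) * z j) = hform n z w"
proof -
  have "(\<Sum>j=2..n. qcnj (w (tau n j)) * z j) = (\<Sum>j=2..n. qcnj (w j) * z j)"
    by (rule sum.cong) (auto simp: tau_def)
  have "(\<Sum>j=1..n+1. qcnj (w (tau n j)) * z j) = qcnj (w (tau n 1)) * z 1 + (\<Sum>j=2..n. qcnj (w (tau n j)) * z j) + qcnj (w (tau n (n+1))) * z (n+1)"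
    by (rule sum_split_R[OF assms])
  also have "\<dots> = hform n z w" using \<open>(\<Sum>j=2..n. qcnj (w (tau n j)) * z j) = _\<close> assms
    by (simp add: tau_def hform_def algebra_simps)
  finally show ?thesis .
qed

definition hrefl :: "nat \<Rightarrow> (nat \<Rightarrow> quat) \<Rightarrow> quat \<Rightarrow> nat \<Rightarrow> nat \<Rightarrow> quat" where
  "hrefl n d s = (\<lambda>i j. idm n i j - (if i \<in> {1..n+1} \<and> j \<in> {1..n+1} then d i * s * qcnj (d (tau n j)) else 0))"

lemma mv_refl: assumes "n \<ge> 1" "hvec n d" "hvec n z"
  shows "mv n (hrefl n d s) z = z - rscale d (s * hform n z d)"
proof (rule ext)
  fix i
  show "mv n (hrefl n d s) z i = (z - rscale d (s * hform n z d)) i"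
  proof (cases "i \<in> {1..n+1}")
    case True
    have "mv n (hrefl n d s) z i = (\<Sum>j=1..n+1. idm n i j * z j) - (\<Sum>j=1..n+1. d i * s * (qcnj (d (tau n j)) * z j))"
      using True by (simp add: mv_def hrefl_def left_diff_distrib sum_subtractf mult.assoc)
    also have "\<dots> = z i - d i * s * hform n z d"
      using sum_idm[OF True, of z] sum_hform[OF assms(1), of d z]
      by (simp only: sum_distrib_left[symmetric])
    finally show ?thesis by (simp add: rscale_def mult.assoc)
  next
    case False
    then show ?thesis using assms by (auto simp: mv_def rscale_def hvec_def)
  qed
qed

lemma rscale_combine: "z - rscale d a - rscale d b = z - rscale d (a + b)"
  by (rule ext) (simp add: rscale_def algebra_simps)

lemma diff_zero_fun [simp]: "z - (\<lambda>_. 0::quat) = z"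
  by (rule ext) simp

lemma rscale_1 [simp]: "rscale d 1 = d"
  by (simp add: rscale_def)
lemma rscale_0 [simp]: "rscale d 0 = (\<lambda>_. 0)"
  by (simp add: rscale_def)
lemma rscale_rscale: "rscale (rscale z a) b = rscale z (a * b)"
  by (simp add: rscale_def mult.assoc)

lemma refl_iso:
  assumes n: "n \<ge> 1" and d: "hvec n d" and cond: "s + qcnj s = qcnj s * hform n d d * s"
    and z: "hvec n z" and w: "hvec n w"
  shows "hform n (mv n (hrefl n d s) z) (mv n (hrefl n d s) w) = hform n z w"
proof -
  define \<alpha> where "\<alpha> = hform n z d"
  define \<beta> where "\<beta> = hform n w d"
  define N where "N = hform n d d"
  have dw: "hform n d w = qcnj \<beta>" using hform_sym[of n w d] by (simp add: \<beta>_def)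
  have "hform n (mv n (hrefl n d s) z) (mv n (hrefl n d s) w)
      = hform n z w - qcnj \<beta> * qcnj s * \<alpha> - qcnj \<beta> * s * \<alpha> + qcnj \<beta> * (qcnj s * N * s) * \<alpha>"
    using n d z w
    by (simp add: mv_refl hform_diff1 hform_diff2 hform_rscale1 hform_rscale2 qcnj_mult dw
        \<alpha>_def[symmetric] \<beta>_def[symmetric] N_def[symmetric] algebra_simps)
  also have "\<dots> = hform n z w"
  proof -
    have "qcnj s * N * s * \<alpha> = (s + qcnj s) * \<alpha>" using cond by (simp add: N_def)
    then show ?thesis by (simp add: algebra_simps)
  qed
  finally show ?thesis .
qed

lemma cond_cnj:
  assumes "s + qcnj s = qcnj s * qrl r * s"
  shows "qcnj s + s = s * qrl r * qcnj s"
proof -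
  have "s * qrl r * qcnj s = qrl r * (s * qcnj s)" by (simp add: qrl_comm mult.assoc)
  also have "\<dots> = qrl r * (qcnj s * s)" by (simp add: mult_qcnj_self qcnj_mult_self)
  also have "\<dots> = qcnj s * qrl r * s" by (simp add: qrl_comm mult.assoc)
  finally show ?thesis using assms by (simp add: add.commute)
qed

lemma refl_inv:
  assumes n: "n \<ge> 1" and d: "hvec n d" and cond: "s + qcnj s = qcnj s * hform n d d * s"
    and z: "hvec n z"
  shows "mv n (hrefl n d (qcnj s)) (mv n (hrefl n d s) z) = z"
proof -
  define \<alpha> where "\<alpha> = hform n z d"
  define N where "N = hform n d d"
  have h: "hform n (mv n (hrefl n d s) z) d = \<alpha> - N * (s * \<alpha>)"
    using n d z by (simp add: mv_refl hform_diff1 hform_rscale1 \<alpha>_def N_def)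
  have "mv n (hrefl n d (qcnj s)) (mv n (hrefl n d s) z)
      = z - rscale d (s * \<alpha>) - rscale d (qcnj s * (\<alpha> - N * (s * \<alpha>)))"
    using n d z by (simp add: mv_refl[OF n d hvec_mv] h) (simp add: mv_refl \<alpha>_def)
  also have "\<dots> = z - rscale d ((s + qcnj s - qcnj s * N * s) * \<alpha>)"
    by (simp add: rscale_combine algebra_simps)
  also have "\<dots> = z" using cond by (simp add: N_def)
  finally show ?thesis .
qed

lemma refl_Sp:
  assumes n: "n \<ge> 1" and d: "hvec n d" and cond: "s + qcnj s = qcnj s * hform n d d * s"
  shows "hrefl n d s \<in> Sp_n1 n"
proof -
  have cond': "qcnj s + qcnj (qcnj s) = qcnj (qcnj s) * hform n d d * qcnj s"
    using cond_cnj[of s "qr (hform n d d)"] cond hform_self_real[of n d] by simp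
  have "hmat n (hrefl n d s)" by (auto simp: hmat_def hrefl_def idm_def)
  moreover have "hmat n (hrefl n d (qcnj s))" by (auto simp: hmat_def hrefl_def idm_def)
  moreover have "\<forall>z w. hvec n z \<longrightarrow> hvec n w \<longrightarrow> hform n (mv n (hrefl n d s) z) (mv n (hrefl n d s) w) = hform n z w"
    using refl_iso[OF n d cond] by blast
  moreover have "\<forall>z. hvec n z \<longrightarrow> mv n (hrefl n d (qcnj s)) (mv n (hrefl n d s) z) = z \<and>
       mv n (hrefl n d s) (mv n (hrefl n d (qcnj s)) z) = z"
    using refl_inv[OF n d cond] refl_inv[OF n d cond'] by simp
  ultimately show ?thesis unfolding Sp_n1_def by blast
qed



lemma refl_map:
  assumes n: "n \<ge> 1" and u: "hvec n u" and u': "hvec n u'"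
    and eq: "hform n u u = hform n u' u'" and N: "hform n (u - u') (u - u') \<noteq> 0"
  shows "\<exists>R \<in> Sp_n1 n. mv n R u = u' \<and> (\<forall>x. hvec n x \<longrightarrow> hform n x (u - u') = 0 \<longrightarrow> mv n R x = x)"
proof -
  define d where "d = u - u'"
  have d: "hvec n d" using u u' by (simp add: d_def hvec_diff)
  define w where "w = hform n u d"
  define s where "s = inverse w"
  have cw: "qcnj w = hform n d u" by (simp add: w_def hform_sym)
  have "hform n d d = hform n u d + hform n d u"
    unfolding d_def using eq by (simp add: hform_diff1 hform_diff2 algebra_simps)
  then have Nw: "hform n d d = w + qcnj w" using cw by (simp add: w_def)
  have w0: "w \<noteq> 0" using N Nw by (auto simp: d_def)
  have cw0: "qcnj w \<noteq> 0" using w0 by simp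
  have cond: "s + qcnj s = qcnj s * hform n d d * s"
  proof -
    have "qcnj s * hform n d d * s = inverse (qcnj w) * (w + qcnj w) * inverse w"
      by (simp add: s_def Nw qcnj_inverse)
    also have "\<dots> = inverse (qcnj w) * w * inverse w + inverse (qcnj w) * qcnj w * inverse w"
      by (simp add: algebra_simps)
    also have "\<dots> = inverse (qcnj w) + inverse w"
      using w0 cw0 by (simp add: mult.assoc)
    finally show ?thesis by (simp add: s_def qcnj_inverse add.commute)
  qed
  have R: "hrefl n d s \<in> Sp_n1 n" by (rule refl_Sp[OF n d cond])
  have "mv n (hrefl n d s) u = u - rscale d (s * w)"
    using mv_refl[OF n d u] by (simp add: w_def)
  also have "\<dots> = u'" using w0 by (simp add: s_def d_def fun_eq_iff)
  finally have 1: "mv n (hrefl n d s) u = u'" .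
  have 2: "mv n (hrefl n d s) x = x" if "hvec n x" "hform n x (u - u') = 0" for x
    using mv_refl[OF n d that(1)] that(2) by (simp add: d_def)
  show ?thesis using R 1 2 by blast
qed

lemma hform_last0:
  assumes "v (n+1) = 0"
  shows "qr (hform n v v) = (\<Sum>i=2..n. nsq (v i))"
  using assms by (simp add: hform_def qr_sum qr_qcnj_mult_self nsq_def power2_eq_square)

lemma hform_last0_nonneg:
  assumes "v (n+1) = 0"
  shows "qr (hform n v v) \<ge> 0"
  unfolding hform_last0[of v n, OF assms] by (rule sum_nonneg) (simp add: nsq_nonneg)

lemma sig:
  assumes n: "n \<ge> 1" and y: "hvec n y" and d: "hvec n d"
    and neg: "qr (hform n y y) < 0" and orth: "hform n d y = 0" and nz: "d \<noteq> (\<lambda>_. 0)"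
  shows "hform n d d \<noteq> 0"
proof
  assume N: "hform n d d = 0"
  have oy: "hform n y d = 0" using orth hform_sym[of n d y] by simp
  show False
  proof (cases "d (n+1) = 0")
    case False
    define b where "b = inverse (d (n+1)) * y (n+1)"
    define v where "v = y - rscale d b"
    have v0: "v (n+1) = 0" using False by (simp add: v_def b_def rscale_def mult.assoc[symmetric])
    have "hform n v v = hform n y y"
      by (simp add: v_def hform_diff1 hform_diff2 hform_rscale1 hform_rscale2 N orth oy)
    then show False using hform_last0_nonneg[of v n, OF v0] neg by simp
  next
    case True
    have "qr (hform n d d) = (\<Sum>i=2..n. nsq (d i))" by (rule hform_last0[of d n, OF True])
    then have "(\<Sum>i=2..n. nsq (d i)) = 0" using N by simp
    then have mid: "\<forall>i\<in>{2..n}. d i = 0"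
      by (subst (asm) sum_nonneg_eq_0_iff) (auto simp: nsq_nonneg nsq_eq_0)
    obtain i where i: "d i \<noteq> 0" using nz by auto
    have "i \<in> {1..n+1}" using d i by (auto simp: hvec_def)
    then have "i = 1" using i mid True by (cases "i = 1"; cases "i = n+1") auto
    then have d1: "d 1 \<noteq> 0" using i by simp
    have "hform n d y = qcnj (y (n+1)) * d 1"
      using mid True by (simp add: hform_def)
    then have "qcnj (y (n+1)) = 0" using orth d1 by simp
    then have "y (n+1) = 0" by simp
    then show False using hform_last0_nonneg[of y n] neg by simp
  qed
qed


lemma base:
  assumes n: "n \<ge> 1" and y: "hvec n y" and y': "hvec n y'"
    and eq: "hform n y y = hform n y' y'" and neg: "qr (hform n y y) < 0"
  shows "\<exists>C \<in> Sp_n1 n. mv n C y = y'"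
proof -
  define q where "q = qr (hform n y y)"
  have Q: "hform n y y = qrl q" using hform_self_real[of n y] by (simp add: q_def)
  define h where "h = hform n y y'"
  show ?thesis
  proof (cases "hform n (y - y') (y - y') = 0")
    case False
    then show ?thesis using refl_map[OF n y y' eq] by blast
  next
    case True
    define ci where "ci = Quat 0 1 0 0"
    define c where "c = (if qr (h * ci) \<noteq> q then ci else - ci)"
    have cq: "qr (h * c) \<noteq> q" using neg by (auto simp: c_def q_def)
    have c1: "nsq c = 1" by (simp add: c_def ci_def nsq_def)
    have cn1: "1 - c \<noteq> 0" by (simp add: c_def ci_def quat_eq_iff)
    define w where "w = rscale y c"
    have w: "hvec n w" using y by (simp add: w_def hvec_rscale)
    have ww: "hform n w w = qrl q"
    proof -
      have "hform n w w = qcnj c * qrl q * c" by (simp add: w_def hform_rscale1 hform_rscale2 Q mult.assoc)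
      also have "\<dots> = qrl q * (qcnj c * c)" by (simp add: qrl_comm mult.assoc)
      finally show ?thesis using c1 by (simp add: unit_qcnj)
    qed
    have yw: "y - w = rscale y (1 - c)" by (rule ext) (simp add: w_def rscale_def algebra_simps)
    have N1: "hform n (y - w) (y - w) \<noteq> 0"
    proof -
      have "hform n (y - w) (y - w) = qcnj (1 - c) * qrl q * (1 - c)"
        by (simp only: yw hform_rscale1 hform_rscale2 Q mult.assoc)
      also have "\<dots> = qrl q * (qcnj (1 - c) * (1 - c))" by (metis qrl_comm mult.assoc)
      also have "\<dots> = qrl q * qrl (nsq (1 - c))" by (simp only: qcnj_mult_self)
      finally show ?thesis using neg cn1 nsq_pos[OF cn1]
        by (simp add: quat_eq_iff q_def)
    qed
    have N2: "hform n (w - y') (w - y') \<noteq> 0"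
    proof -
      have e: "hform n (w - y') (w - y') = qrl q - h * c - qcnj (h * c) + qrl q"
      proof -
        have a: "hform n w y' = h * c" by (simp add: w_def hform_rscale1 h_def)
        have b: "hform n y' w = qcnj (h * c)" using hform_sym[of n w y'] a by simp
        show ?thesis using eq Q ww a b by (simp add: hform_diff1 hform_diff2 algebra_simps)
      qed
      have "qr (hform n (w - y') (w - y')) = 2 * q - 2 * qr (h * c)"
        unfolding e by simp
      then show ?thesis using cq by auto
    qed
    obtain R1 where R1: "R1 \<in> Sp_n1 n" "mv n R1 y = w"
      using refl_map[OF n y w _ N1] Q ww by auto
    obtain R2 where R2: "R2 \<in> Sp_n1 n" "mv n R2 w = y'"
      using refl_map[OF n w y' _ N2] Q ww eq by auto
    show ?thesis using R1 R2 Sp_mmul[OF R2(1) R1(1)] by (auto simp: mv_mmul intro!: bexI[of _ "mmul n R2 R1"])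
  qed
qed

lemma witt:
  fixes m :: nat and f g :: "nat \<Rightarrow> nat \<Rightarrow> quat"
  shows "n \<ge> 1 \<Longrightarrow> (\<forall>i\<le>m. hvec n (f i) \<and> hvec n (g i)) \<Longrightarrow>
   (\<forall>i\<le>m. \<forall>j\<le>m. hform n (f i) (f j) = hform n (g i) (g j)) \<Longrightarrow>
   qr (hform n (f 0) (f 0)) < 0 \<Longrightarrow> \<exists>C \<in> Sp_n1 n. \<forall>i\<le>m. mv n C (f i) = g i"
proof (induction m)
  case 0
  then show ?case using base[of n "f 0" "g 0"] by auto
next
  case (Suc m)
  note n = Suc.prems(1)
  obtain C where C: "C \<in> Sp_n1 n" "\<forall>i\<le>m. mv n C (f i) = g i"
    using Suc.IH Suc.prems by auto
  define u where "u = mv n C (f (Suc m))"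
  define u' where "u' = g (Suc m)"
  have hf: "\<And>i. i \<le> Suc m \<Longrightarrow> hvec n (f i)" and hg: "\<And>i. i \<le> Suc m \<Longrightarrow> hvec n (g i)"
    using Suc.prems by auto
  have gr: "\<And>i j. i \<le> Suc m \<Longrightarrow> j \<le> Suc m \<Longrightarrow> hform n (f i) (f j) = hform n (g i) (g j)"
    using Suc.prems by auto
  have u: "hvec n u" by (simp add: u_def hvec_mv)
  have u': "hvec n u'" using hg by (simp add: u'_def)
  have eq: "hform n u u = hform n u' u'"
    using Sp_iso[OF C(1) hf hf, of "Suc m" "Suc m"] gr[of "Suc m" "Suc m"] by (simp add: u_def u'_def)
  have orth: "hform n (u - u') (g i) = 0" if "i \<le> m" for i
  proof -
    have "hform n u (g i) = hform n (f (Suc m)) (f i)"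
      using Sp_iso[OF C(1) hf hf, of "Suc m" i] C(2) that by (simp add: u_def)
    then show ?thesis using gr[of "Suc m" i] that by (simp add: hform_diff1 u'_def)
  qed
  show ?case
  proof (cases "u - u' = (\<lambda>_. 0)")
    case True
    then have "u = u'" by (simp add: fun_eq_iff)
    then show ?thesis using C by (auto simp: u_def u'_def le_Suc_eq intro!: bexI[of _ C])
  next
    case False
    have neg0: "qr (hform n (g 0) (g 0)) < 0" using Suc.prems(4) gr[of 0 0] by simp
    have N: "hform n (u - u') (u - u') \<noteq> 0"
      by (rule sig[OF n hg[of 0] hvec_diff[OF u u'] neg0 orth False]) simp_all
    obtain R where R: "R \<in> Sp_n1 n" "mv n R u = u'"
      "\<And>x. hvec n x \<Longrightarrow> hform n x (u - u') = 0 \<Longrightarrow> mv n R x = x"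
      using refl_map[OF n u u' eq N] by blast
    have "mv n (mmul n R C) (f i) = g i" if "i \<le> Suc m" for i
    proof (cases "i = Suc m")
      case True then show ?thesis using R by (simp add: mv_mmul u_def u'_def)
    next
      case False
      then have im: "i \<le> m" using that by simp
      have "hform n (g i) (u - u') = 0" using orth[OF im] hform_sym[of n "u - u'" "g i"] by simp
      then show ?thesis using R(3)[OF hg[of i]] C(2) im by (simp add: mv_mmul)
    qed
    then show ?thesis using Sp_mmul[OF R(1) C(1)] by blast
  qed
qed



lemma tuple_hvec:
  assumes "associated_tuple n A B p" "n \<ge> 2" "i \<in> {1..2*n}"
  shows "hvec n (p i)"
proof -
  have w: "wns_data n A B (p 1) (p 2) (p 3) (p 4) (\<lambda>k. p (k + 4)) (\<lambda>k. p (k + (n + 2)))"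
    using assms(1) by (simp add: associated_tuple_def)
  consider "i = 1" | "i = 2" | "i = 3" | "i = 4" | "i \<in> {5..n+2}" | "i \<in> {n+3..2*n}"
    using assms(3) by force
  then show ?thesis
  proof cases
    case 5
    then have k: "i - 4 \<in> {1..n-2}" "i - 4 + 4 = i" by auto
    then show ?thesis using w unfolding wns_data_def pos_eigvec_def pos_vec_def by metis
  next
    case 6
    then have k: "i - (n+2) \<in> {1..n-2}" "i - (n+2) + (n+2) = i" by auto
    then show ?thesis using w unfolding wns_data_def pos_eigvec_def pos_vec_def by metis
  qed (use w in \<open>auto simp: wns_data_def attracting_vec_def repelling_vec_def null_vec_def\<close>)
qed

lemma tuple_null:
  assumes "associated_tuple n A B p"
  shows "hform n (p 1) (p 1) = 0" "hform n (p 2) (p 2) = 0"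
  using assms by (auto simp: associated_tuple_def wns_data_def attracting_vec_def repelling_vec_def null_vec_def)

lemma mult_eq_1_inv: "(x::quat) * y = 1 \<Longrightarrow> x = inverse y"
proof -
  assume h: "x * y = 1"
  then have y: "y \<noteq> 0" by auto
  have "x = x * (y * inverse y)" using y by simp
  also have "\<dots> = inverse y" using h by (simp add: mult.assoc[symmetric])
  finally show ?thesis .
qed

lemma orbit_conj:
  assumes a: "nsq a = 1"
  shows "sp1_orbit (\<lambda>i j. qcnj a * G i j * a) = sp1_orbit G"
proof
  have qa: "qnorm a = 1" "qnorm (qcnj a) = 1" using a by (simp_all add: qnorm_nsq qnorm_qcnj nsq_qcnj)
  show "sp1_orbit (\<lambda>i j. qcnj a * G i j * a) \<subseteq> sp1_orbit G"
  proof
    fix H assume "H \<in> sp1_orbit (\<lambda>i j. qcnj a * G i j * a)"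
    then obtain \<mu> where mu: "qnorm \<mu> = 1" "H = (\<lambda>i j. \<mu> * (qcnj a * G i j * a) * qcnj \<mu>)"
      by (auto simp: sp1_orbit_def)
    have "H = (\<lambda>i j. (\<mu> * qcnj a) * G i j * qcnj (\<mu> * qcnj a))"
      using mu(2) by (simp add: qcnj_mult mult.assoc)
    moreover have "qnorm (\<mu> * qcnj a) = 1" using mu(1) qa by (simp add: qnorm_mult)
    ultimately show "H \<in> sp1_orbit G" by (auto simp: sp1_orbit_def)
  qed
  show "sp1_orbit G \<subseteq> sp1_orbit (\<lambda>i j. qcnj a * G i j * a)"
  proof
    fix H assume "H \<in> sp1_orbit G"
    then obtain \<mu> where mu: "qnorm \<mu> = 1" "H = (\<lambda>i j. \<mu> * G i j * qcnj \<mu>)"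
      by (auto simp: sp1_orbit_def)
    have aa: "a * qcnj a = 1" using a by (simp add: unit_qcnj)
    have "(\<lambda>i j. (\<mu> * a) * (qcnj a * G i j * a) * qcnj (\<mu> * a)) = (\<lambda>i j. \<mu> * (a * qcnj a) * G i j * (a * qcnj a) * qcnj \<mu>)"
      by (simp add: qcnj_mult mult.assoc)
    also have "\<dots> = H" using aa mu(2) by simp
    finally have "H = (\<lambda>i j. (\<mu> * a) * (qcnj a * G i j * a) * qcnj (\<mu> * a))" by simp
    moreover have "qnorm (\<mu> * a) = 1" using mu(1) qa by (simp add: qnorm_mult)
    ultimately show "H \<in> sp1_orbit (\<lambda>i j. qcnj a * G i j * a)" unfolding sp1_orbit_def by blast
  qed
qed


lemma qr_2 [simp]: "qr (2::quat) = 2"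
proof -
  have "qr (2::quat) = qr (1 + 1 :: quat)" by (simp only: one_add_one)
  also have "\<dots> = 1 + 1" by (simp only: quat_comps)
  finally show ?thesis by simp
qed

lemma gram_in: "i \<in> {1..2*n} \<Longrightarrow> j \<in> {1..2*n} \<Longrightarrow> gram n p i j = hform n (p i) (p j)"
  by (simp add: gram_def)

lemma dir_if:
  assumes n: "n \<ge> 2"
    and tp: "associated_tuple n A B p" and tp': "associated_tuple n A' B' p'"
    and norm: "gram_normalized n p"
    and orb: "sp1_orbit (gram n p) = sp1_orbit (gram n p')"
  shows "\<exists>C \<in> Sp_n1 n. \<forall>i\<in>{1..2*n}. same_point (mv n C (p i)) (p' i)"
proof -
  have n1: "n \<ge> 1" using n by simp
  have "gram n p \<in> sp1_orbit (gram n p)"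
    unfolding sp1_orbit_def by (auto intro!: exI[of _ 1] simp: qnorm_def)
  then obtain \<nu> where nu: "qnorm \<nu> = 1" "gram n p = (\<lambda>i j. \<nu> * gram n p' i j * qcnj \<nu>)"
    using orb by (auto simp: sp1_orbit_def)
  have nu1: "nsq \<nu> = 1" using nu(1) by (simp add: qnorm_1_iff)
  define P where "P i = rscale (p' i) (qcnj \<nu>)" for i
  have E: "hform n (P i) (P j) = hform n (p i) (p j)" if "i \<in> {1..2*n}" "j \<in> {1..2*n}" for i j
  proof -
    have "hform n (P i) (P j) = \<nu> * gram n p' i j * qcnj \<nu>"
      using that by (simp add: P_def hform_rscale1 hform_rscale2 gram_in mult.assoc)
    also have "\<dots> = gram n p i j" using nu(2) by metis
    finally show ?thesis using that by (simp add: gram_in)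
  qed
  define f where "f k = (if k = 0 then p 1 - p 2 else p k)" for k
  define g where "g k = (if k = 0 then P 1 - P 2 else P k)" for k
  have R12: "1 \<in> {1..2*n}" "2 \<in> {1..2*n}" using n by auto
  have hv: "\<forall>i\<le>2*n. hvec n (f i) \<and> hvec n (g i)"
  proof (intro allI impI)
    fix i :: nat assume i: "i \<le> 2*n"
    have hp: "hvec n (p k)" "hvec n (P k)" if "k \<in> {1..2*n}" for k
      using tuple_hvec[OF tp n that] tuple_hvec[OF tp' n that] by (simp_all add: P_def hvec_rscale)
    show "hvec n (f i) \<and> hvec n (g i)"
      using i hp[OF R12(1)] hp[OF R12(2)] hp[of i] by (auto simp: f_def g_def hvec_diff)
  qed
  have gr: "\<forall>i\<le>2*n. \<forall>j\<le>2*n. hform n (f i) (f j) = hform n (g i) (g j)"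
  proof (intro allI impI)
    fix i j :: nat assume i: "i \<le> 2*n" and j: "j \<le> 2*n"
    have Ei: "i \<noteq> 0 \<Longrightarrow> i \<in> {1..2*n}" and Ej: "j \<noteq> 0 \<Longrightarrow> j \<in> {1..2*n}" using i j by auto
    show "hform n (f i) (f j) = hform n (g i) (g j)"
      using E[OF R12(1) R12(1)] E[OF R12(1) R12(2)] E[OF R12(2) R12(1)] E[OF R12(2) R12(2)]
        E[OF Ei Ej] E[OF Ei R12(1)] E[OF Ei R12(2)] E[OF R12(1) Ej] E[OF R12(2) Ej]
      by (cases "i = 0"; cases "j = 0") (simp_all add: f_def g_def hform_diff1 hform_diff2)
  qed
  have g12: "hform n (p 1) (p 2) = 1" using norm R12 by (simp add: gram_normalized_def gram_in Let_def)
  have g21: "hform n (p 2) (p 1) = 1" using g12 hform_sym[of n "p 1" "p 2"] by simp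
  have neg: "qr (hform n (f 0) (f 0)) < 0"
    using tuple_null[OF tp] g12 g21 by (simp add: f_def hform_diff1 hform_diff2)
  obtain C where C: "C \<in> Sp_n1 n" "\<forall>i\<le>2*n. mv n C (f i) = g i"
    using witt[OF n1 hv gr neg] by blast
  have "same_point (mv n C (p i)) (p' i)" if i: "i \<in> {1..2*n}" for i
  proof -
    have "mv n C (p i) = P i" using C(2) i by (auto simp: f_def g_def)
    moreover have "p' i = rscale (P i) \<nu>"
      using nu1 by (simp add: P_def rscale_rscale unit_qcnj)
    moreover have "\<nu> \<noteq> 0" using nu1 by (auto simp: nsq_def)
    ultimately show ?thesis unfolding same_point_def by auto
  qed
  then show ?thesis using C(1) by blast
qed


lemma dir_only:
  assumes n: "n \<ge> 2"
    and tp: "associated_tuple n A B p" and tp': "associated_tuple n A' B' p'"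
    and norm: "gram_normalized n p" and norm': "gram_normalized n p'"
    and C: "C \<in> Sp_n1 n" and sp: "\<forall>i\<in>{1..2*n}. same_point (mv n C (p i)) (p' i)"
  shows "sp1_orbit (gram n p) = sp1_orbit (gram n p')"
proof -
  obtain c where c: "\<And>i. i \<in> {1..2*n} \<Longrightarrow> c i \<noteq> 0 \<and> p' i = rscale (mv n C (p i)) (c i)"
    using sp unfolding same_point_def by metis
  define G where "G = gram n p"
  define G' where "G' = gram n p'"
  have GG: "G' i j = qcnj (c j) * G i j * c i" if "i \<in> {1..2*n}" "j \<in> {1..2*n}" for i j
  proof -
    have "G' i j = hform n (rscale (mv n C (p i)) (c i)) (rscale (mv n C (p j)) (c j))"
      using that c by (simp add: G'_def gram_in)
    also have "\<dots> = qcnj (c j) * (hform n (p i) (p j) * c i)"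
      using Sp_iso[OF C tuple_hvec[OF tp n that(1)] tuple_hvec[OF tp n that(2)]]
      by (simp add: hform_rscale1 hform_rscale2)
    finally show ?thesis using that by (simp add: G_def gram_in mult.assoc)
  qed
  have N: "G 1 2 = 1" "G 1 3 = 1" "G 1 4 = 1" "qnorm (G 2 3) = 1"
      "\<And>k. k \<in> {n+3..2*n} \<Longrightarrow> G 1 k = 1" "\<And>j. j \<in> {5..n+2} \<Longrightarrow> G 3 j = 1"
    using norm unfolding gram_normalized_def Let_def G_def by auto
  have N': "G' 1 2 = 1" "G' 1 3 = 1" "G' 1 4 = 1" "qnorm (G' 2 3) = 1"
      "\<And>k. k \<in> {n+3..2*n} \<Longrightarrow> G' 1 k = 1" "\<And>j. j \<in> {5..n+2} \<Longrightarrow> G' 3 j = 1"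
    using norm' unfolding gram_normalized_def Let_def G'_def by auto
  have I: "1 \<in> {1..2*n}" "2 \<in> {1..2*n}" "3 \<in> {1..2*n}" "4 \<in> {1..2*n}" using n by auto
  define a where "a = c 1"
  define b where "b = qcnj (inverse a)"
  have B: "c k = b" if "k \<in> {1..2*n}" "G 1 k = 1" "G' 1 k = 1" for k
  proof -
    have "qcnj (c k) * c 1 = 1" using GG[OF I(1) that(1)] that(2,3) by simp
    then have "qcnj (c k) = inverse a" unfolding a_def by (rule mult_eq_1_inv)
    then show ?thesis unfolding b_def by (metis qcnj_qcnj)
  qed
  have c2: "c 2 = b" using B[OF I(2)] N N' by simp
  have c3: "c 3 = b" using B[OF I(3)] N N' by simp
  have c4: "c 4 = b" using B[OF I(4)] N N' by simp
  have ck: "c k = b" if "k \<in> {n+3..2*n}" for k using B[of k] N(5) N'(5) that by auto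
  have "qnorm (G' 2 3) = qnorm b * qnorm (G 2 3) * qnorm b"
    using GG[OF I(2) I(3)] c2 c3 by (simp add: qnorm_mult qnorm_qcnj)
  then have "qnorm b * qnorm b = 1" using N(4) N'(4) by simp
  moreover have "qnorm b \<ge> 0" by (simp add: qnorm_def)
  ultimately have "qnorm b = 1" using power2_eq_1_iff[of "qnorm b"] by (auto simp: power2_eq_square)
  then have b1: "nsq b = 1" by (simp add: qnorm_1_iff)
  have "qcnj b * c 1 = 1" using GG[OF I(1) I(2)] c2 N(1) N'(1) by simp
  moreover have "qcnj b * b = 1" using b1 by (simp add: unit_qcnj)
  ultimately have ab: "c 1 = b"
    by (metis mult_eq_1_inv inverse_inverse_eq qcnj_qcnj) 
  have cj: "c j = b" if "j \<in> {5..n+2}" for j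
  proof -
    have j: "j \<in> {1..2*n}" using that n by auto
    have "qcnj (c j) * b = 1" using GG[OF I(3) j] c3 N(6)[OF that] N'(6)[OF that] by simp
    then have "qcnj (c j) = inverse b" by (rule mult_eq_1_inv)
    also have "\<dots> = qcnj b" using mult_eq_1_inv[OF \<open>qcnj b * b = 1\<close>] by simp
    finally show ?thesis by simp
  qed
  have call: "c i = b" if iR: "i \<in> {1..2*n}" for i
  proof -
    consider "i = 1" | "i = 2" | "i = 3" | "i = 4" | "i \<in> {5..n+2}" | "i \<in> {n+3..2*n}"
      using iR by force
    then show ?thesis using ab c2 c3 c4 cj ck by cases auto
  qed
  have "G' = (\<lambda>i j. qcnj b * G i j * b)"
  proof (intro ext)
    fix i j
    show "G' i j = qcnj b * G i j * b"
    proof (cases "i \<in> {1..2*n} \<and> j \<in> {1..2*n}")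
      case True then show ?thesis using GG call by auto
    next
      case False then show ?thesis by (auto simp: G_def G'_def gram_def)
    qed
  qed
  then show ?thesis using orbit_conj[OF b1, of G] by (simp add: G_def G'_def)
qed


theorem mainTheorem8:
  fixes n :: nat
    and A B A' B' :: "nat \<Rightarrow> nat \<Rightarrow> quat"
    and p p' :: "nat \<Rightarrow> nat \<Rightarrow> quat"
  assumes "n \<ge> 2"
    and "weakly_nonsingular n A B" and "weakly_nonsingular n A' B'"
    and "associated_tuple n A B p" and "associated_tuple n A' B' p'"
    and "gram_normalized n p" and "gram_normalized n p'"
  shows "(\<exists>C \<in> Sp_n1 n. \<forall>i\<in>{1..2*n}. same_point (mv n C (p i)) (p' i))
         \<longleftrightarrow> sp1_orbit (gram n p) = sp1_orbit (gram n p')"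
proof
  assume "\<exists>C \<in> Sp_n1 n. \<forall>i\<in>{1..2*n}. same_point (mv n C (p i)) (p' i)"
  then obtain C where "C \<in> Sp_n1 n" "\<forall>i\<in>{1..2*n}. same_point (mv n C (p i)) (p' i)" by blast
  then show "sp1_orbit (gram n p) = sp1_orbit (gram n p')"
    using dir_only[OF assms(1) assms(4) assms(5) assms(6) assms(7)] by blast
next
  assume "sp1_orbit (gram n p) = sp1_orbit (gram n p')"
  then show "\<exists>C \<in> Sp_n1 n. \<forall>i\<in>{1..2*n}. same_point (mv n C (p i)) (p' i)"
    using dir_if[OF assms(1) assms(4) assms(5) assms(6)] by blast
qed

end
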